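(* Let $p$ be an odd prime, $k\in\{-1,1\}$, $n\ge 1$ an integer, and let $L_n^k(f,p)$ be a Legendre graph of order $n$ (with bijection $f$). Put $q=\lfloor n/p\rfloor$, $r=n-qp$ and $F=\{1,2,\dots,r\}$ (empty if $r=0$). For a vertex $v$ with $1\le f(v)\le qp$ let $$\omega^k(v)=\{\xi\in\{0,1,\dots,p-1\}:\ \xi\equiv f(v)+c \pmod p \text{ for some } c\in F,\ (\xi/p)=k\},$$ and for a vertex $v$ with $qp+1\le f(v)\le n$ let $\varepsilon(v)=f(v)-qp\in F$ and $$\pi^k(v)=\{\xi\in\{0,1,\dots,p-1\}:\ \xi\equiv f(v)+c \pmod p \text{ for some } c\in F\setminus\{\varepsilon(v)\},\ (\xi/p)=k\}.$$ Then for every vertex $v$: (i) if $1\le f(v)\le qp$ and $(2f(v)/p)=k$, then $\deg(v)=q\frac{p-1}{2}-1+|\omega^k(v)|$; (ii) if $1\le f(v)\le qp$ and either $(2f(v)/p)=-k$ or $f(v)\equiv 0\pmod p$, then $\deg(v)=q\frac{p-1}{2}+|\omega^k(v)|$; (iii) if $qp+1\le f(v)\le n$, then $\deg(v)=q\frac{p-1}{2}+|\pi^k(v)|$.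
   Context: For an odd prime $p$ and an integer $a$ not divisible by $p$, $(a/p)$ denotes the Legendre symbol: $1$ if $a$ is a quadratic residue mod $p$, $-1$ otherwise (it is not assigned the value $\pm1$ when $p\mid a$). For $k\in\{-1,1\}$, a Legendre graph $L_n^k(f,p)$ of order $n$ is a simple graph on an $n$-element vertex set $V$ together with a bijection $f:V\to\{1,2,\dots,n\}$, whose edges are exactly the pairs $\{a,b\}$ of distinct vertices with $p\nmid f(a)+f(b)$ and $((f(a)+f(b))/p)=k$. *)

theory Defs
  imports "HOL-Number_Theory.Number_Theory"
begin

definition legendre_graph ::
  "'a set \<Rightarrow> 'a set set \<Rightarrow> ('a \<Rightarrow> nat) \<Rightarrow> nat \<Rightarrow> int \<Rightarrow> nat \<Rightarrow> bool" where
  "legendre_graph V E f n k p \<longleftrightarrow>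
     finite V \<and> bij_betw f V {1..n} \<and>
     E = {{a, b} | a b. a \<in> V \<and> b \<in> V \<and> a \<noteq> b \<and> \<not> p dvd (f a + f b) \<and>
                        Legendre (int (f a + f b)) (int p) = k}"

definition degree :: "'a set \<Rightarrow> 'a set set \<Rightarrow> 'a \<Rightarrow> nat" where
  "degree V E v = card {u \<in> V. {u, v} \<in> E}"

end

theory Submission
  imports Defs
begin

lemma Legendre_cong:
  assumes "[a = b] (mod m)" shows "Legendre a m = Legendre b m"
proof -
  have "[a = 0] (mod m) \<longleftrightarrow> [b = 0] (mod m)"
    using assms cong_sym cong_trans by blast
  moreover have "QuadRes m a \<longleftrightarrow> QuadRes m b"
    unfolding QuadRes_def using assms cong_sym cong_trans by blast
  ultimately show ?thesis unfolding Legendre_def by simp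
qed

lemma Legendre_mod_nat:
  "Legendre (int x) (int p) = Legendre (int (x mod p)) (int p)"
  by (rule Legendre_cong) (simp add: cong_def of_nat_mod)

lemma mod_inj_block:
  fixes p t :: nat
  shows "inj_on (\<lambda>m. (m + a) mod p) {t..<t+p}"
proof (rule inj_onI)
  fix x y assume x: "x \<in> {t..<t+p}" and y: "y \<in> {t..<t+p}" and e: "(x + a) mod p = (y + a) mod p"
  have c: "[x = y] (mod p)" using e by (metis cong_add_rcancel_nat cong_def)
  show "x = y"
  proof (rule ccontr)
    assume "x \<noteq> y"
    then consider "x < y" | "y < x" by linarith
    then show False
    proof cases
      case 1
      then have "p dvd y - x" using c by (metis cong_sym cong_to_1'_nat less_imp_le_nat mod_eq_dvd_iff_nat cong_def)
      moreover have "y - x < p" "0 < y - x" using x y 1 by auto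
      ultimately show False using nat_dvd_not_less by blast
    next
      case 2
      then have "p dvd x - y" using c by (metis less_imp_le_nat mod_eq_dvd_iff_nat cong_def)
      moreover have "x - y < p" "0 < x - y" using x y 2 by auto
      ultimately show False using nat_dvd_not_less by blast
    qed
  qed
qed

lemma mod_bij_block:
  fixes p t :: nat assumes "p > 0"
  shows "bij_betw (\<lambda>m. (m + a) mod p) {t..<t+p} {0..<p}"
proof -
  have i: "inj_on (\<lambda>m. (m + a) mod p) {t..<t+p}" by (rule mod_inj_block)
  have s: "(\<lambda>m. (m + a) mod p) ` {t..<t+p} \<subseteq> {0..<p}" using assms by auto
  have "card ((\<lambda>m. (m + a) mod p) ` {t..<t+p}) = card {0..<p}"
    using card_image[OF i] by simp
  then have "(\<lambda>m. (m + a) mod p) ` {t..<t+p} = {0..<p}"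
    using s by (simp add: card_subset_eq)
  then show ?thesis using i by (simp add: bij_betw_def)
qed


lemma QR_count_int:
  fixes p :: nat assumes pr: "prime p" and od: "odd p"
  shows "card {x \<in> {1..int p - 1}. QuadRes (int p) x} = (p - 1) div 2"
proof -
  define h where "h = (int p - 1) div 2"
  define g where "g = (\<lambda>y::int. y^2 mod int p)"
  have pri: "prime (int p)" using pr by simp
  have p1: "p > 1" using pr prime_gt_1_nat by blast
  have odi: "odd (int p)" using od by simp
  have hp: "2 * h + 1 = int p" using odi unfolding h_def by presburger
  have inj: "inj_on g {1..h}"
  proof (rule inj_onI)
    fix y z assume y: "y \<in> {1..h}" and z: "z \<in> {1..h}" and e: "g y = g z"
    have "int p dvd y^2 - z^2" using e unfolding g_def by (simp add: mod_eq_dvd_iff)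
    moreover have "y^2 - z^2 = (y - z) * (y + z)" by (simp add: power2_eq_square algebra_simps)
    ultimately have "int p dvd (y - z) \<or> int p dvd (y + z)" using pri prime_dvd_mult_iff by metis
    moreover have "\<not> int p dvd (y + z)"
    proof
      assume "int p dvd (y + z)"
      moreover have "0 < y + z" "y + z < int p" using y z hp by auto
      ultimately show False using zdvd_not_zless by blast
    qed
    ultimately have d: "int p dvd (y - z)" by blast
    show "y = z"
    proof (rule ccontr)
      assume "y \<noteq> z"
      then consider "y < z" | "z < y" by linarith
      then show False
      proof cases
        case 1
        have "int p dvd (z - y)" using d by (metis dvd_diff_commute)
        moreover have "0 < z - y" "z - y < int p" using y z hp 1 by auto
        ultimately show False using zdvd_not_zless by blast
      next
        case 2
        moreover have "0 < y - z" "y - z < int p" using y z hp 2 by auto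
        ultimately show False using d zdvd_not_zless by blast
      qed
    qed
  qed
  have img: "g ` {1..h} = {x \<in> {1..int p - 1}. QuadRes (int p) x}"
  proof
    show "g ` {1..h} \<subseteq> {x \<in> {1..int p - 1}. QuadRes (int p) x}"
    proof
      fix x assume "x \<in> g ` {1..h}"
      then obtain y where y: "y \<in> {1..h}" and xy: "x = g y" by blast
      have ndy: "\<not> int p dvd y"
      proof
        assume "int p dvd y"
        moreover have "0 < y" "y < int p" using y hp by auto
        ultimately show False using zdvd_not_zless by blast
      qed
      have "\<not> int p dvd y^2" using ndy pri prime_dvd_power by blast
      then have "x \<noteq> 0" using xy unfolding g_def by (simp add: dvd_eq_mod_eq_0)
      moreover have "0 \<le> x" "x < int p" using xy p1 unfolding g_def by auto
      moreover have "QuadRes (int p) x" unfolding QuadRes_def xy g_def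
        by (rule exI[of _ y]) (simp add: cong_def)
      ultimately show "x \<in> {x \<in> {1..int p - 1}. QuadRes (int p) x}" by auto
    qed
  next
    show "{x \<in> {1..int p - 1}. QuadRes (int p) x} \<subseteq> g ` {1..h}"
    proof
      fix x assume x: "x \<in> {x \<in> {1..int p - 1}. QuadRes (int p) x}"
      then obtain y where yx: "[y^2 = x] (mod int p)" unfolding QuadRes_def by blast
      define y0 where "y0 = y mod int p"
      have "[y0 = y] (mod int p)" unfolding y0_def cong_def by simp
      then have y0x: "[y0^2 = x] (mod int p)" using yx cong_pow cong_trans by blast
      have xm: "x mod int p = x" using x by auto
      have y0r: "0 \<le> y0" "y0 < int p" unfolding y0_def using p1 by auto
      have "y0 \<noteq> 0"
      proof
        assume "y0 = 0"
        then have "int p dvd x" using y0x by (simp add: cong_def dvd_eq_mod_eq_0)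
        moreover have "0 < x" "x < int p" using x by auto
        ultimately show False using zdvd_not_zless by blast
      qed
      show "x \<in> g ` {1..h}"
      proof (cases "y0 \<le> h")
        case True
        have "g y0 = x" unfolding g_def using y0x xm by (simp add: cong_def)
        moreover have "y0 \<in> {1..h}" using True \<open>y0 \<noteq> 0\<close> y0r by auto
        ultimately show ?thesis by force
      next
        case False
        define y1 where "y1 = int p - y0"
        have "y1^2 = y0^2 + int p * (int p - 2 * y0)" unfolding y1_def by (simp add: power2_eq_square algebra_simps)
        then have "[y1^2 = y0^2] (mod int p)" by (simp add: cong_def)
        then have "g y1 = x" unfolding g_def using y0x xm by (metis cong_def cong_trans)
        moreover have "y1 \<in> {1..h}" using False y0r hp unfolding y1_def by auto
        ultimately show ?thesis by force
      qed
    qed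
  qed
  have "card {x \<in> {1..int p - 1}. QuadRes (int p) x} = card {1..h}"
    using card_image[OF inj] img by simp
  also have "\<dots> = nat h" by simp
  also have "nat h = (p - 1) div 2" unfolding h_def using p1 by (simp add: nat_div_distrib)
  finally show ?thesis .
qed


lemma Leg_one_iff: "Legendre a m = 1 \<longleftrightarrow> \<not> [a = 0] (mod m) \<and> QuadRes m a"
  unfolding Legendre_def by simp
lemma Leg_m1_iff: "Legendre a m = -1 \<longleftrightarrow> \<not> [a = 0] (mod m) \<and> \<not> QuadRes m a"
  unfolding Legendre_def by simp
lemma Leg_zero_iff: "Legendre a m = 0 \<longleftrightarrow> [a = 0] (mod m)"
  unfolding Legendre_def by simp

lemma cong0_small: "x < p \<Longrightarrow> [int x = 0] (mod int p) \<longleftrightarrow> x = 0"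
  by (simp add: cong_def)

lemma QR_count1:
  fixes p :: nat assumes pr: "prime p" and od: "odd p"
  shows "card {x \<in> {0..<p}. Legendre (int x) (int p) = 1} = (p - 1) div 2"
proof -
  have "int ` {x \<in> {0..<p}. Legendre (int x) (int p) = 1} = {x \<in> {1..int p - 1}. QuadRes (int p) x}"
  proof safe
    fix x assume x: "x \<in> {0..<p}" "Legendre (int x) (int p) = 1"
    then have c: "\<not> [int x = 0] (mod int p)" "QuadRes (int p) (int x)" unfolding Leg_one_iff by auto
    have "x < p" using x by simp
    then have "x \<noteq> 0" using c(1) cong0_small[of x p] by simp
    then show "int x \<in> {1..int p - 1}" using \<open>x < p\<close> by simp
    show "QuadRes (int p) (int x)" by (fact c(2))
  next
    fix x assume x: "x \<in> {1..int p - 1}" "QuadRes (int p) x"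
    then have "nat x \<in> {0..<p}" and xx: "int (nat x) = x" by auto
    moreover have "Legendre (int (nat x)) (int p) = 1"
    proof -
      have "nat x < p" "nat x \<noteq> 0" using x by auto
      then have "\<not> [int (nat x) = 0] (mod int p)" using cong0_small[of "nat x" p] by simp
      then show ?thesis unfolding Leg_one_iff using x(2) xx by simp
    qed
    ultimately show "x \<in> int ` {x \<in> {0..<p}. Legendre (int x) (int p) = 1}"
      by (intro image_eqI[where x="nat x"]) (simp_all add: xx)
  qed
  moreover have "card (int ` {x \<in> {0..<p}. Legendre (int x) (int p) = 1}) = card {x \<in> {0..<p}. Legendre (int x) (int p) = 1}"
    by (rule card_image) (simp add: inj_on_def)
  ultimately have "card {x \<in> {0..<p}. Legendre (int x) (int p) = 1} = card {x \<in> {1..int p - 1}. QuadRes (int p) x}"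
    by simp
  then show ?thesis using QR_count_int[OF pr od] by simp
qed

lemma QR_count:
  fixes p :: nat assumes pr: "prime p" and od: "odd p" and k: "k \<in> {-1, 1::int}"
  shows "card {x \<in> {0..<p}. Legendre (int x) (int p) = k} = (p - 1) div 2"
proof (cases "k = 1")
  case True then show ?thesis using QR_count1[OF pr od] by simp
next
  case False
  then have k: "k = -1" using k by auto
  have p1: "p > 1" using pr prime_gt_1_nat by blast
  let ?A = "{x \<in> {0..<p}. Legendre (int x) (int p) = 1}"
  let ?B = "{x \<in> {0..<p}. Legendre (int x) (int p) = -1}"
  have *: "x \<in> ?A \<union> ?B \<longleftrightarrow> x \<in> {1..<p}" for x
  proof (cases "x < p")
    case True
    then have "[int x = 0] (mod int p) \<longleftrightarrow> x = 0" by (rule cong0_small)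
    then show ?thesis using True unfolding Leg_one_iff Leg_m1_iff by auto
  qed simp
  have "?A \<union> ?B = {1..<p}" using * by blast
  moreover have "?A \<inter> ?B = {}" by auto
  moreover have "finite ?A" "finite ?B" by auto
  ultimately have "card ?A + card ?B = p - 1"
    using card_Un_disjoint[of ?A ?B] by simp
  moreover have "p - 1 = 2 * ((p - 1) div 2)" using od p1 by presburger
  ultimately show ?thesis using QR_count1[OF pr od] unfolding k by linarith
qed


lemma block_count:
  fixes p t a :: nat assumes pr: "prime p" and od: "odd p" and k: "k \<in> {-1, 1::int}"
  shows "card {m \<in> {t..<t+p}. Legendre (int (m + a)) (int p) = k} = (p - 1) div 2"
proof -
  let ?g = "\<lambda>m. (m + a) mod p"
  have p0: "p > 0" using pr prime_gt_0_nat by blast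
  have bij: "bij_betw ?g {t..<t+p} {0..<p}" by (rule mod_bij_block[OF p0])
  have inj: "inj_on ?g {m \<in> {t..<t+p}. Legendre (int (m + a)) (int p) = k}"
    using bij unfolding bij_betw_def by (auto intro: inj_on_subset)
  have "?g ` {m \<in> {t..<t+p}. Legendre (int (m + a)) (int p) = k} = {x \<in> {0..<p}. Legendre (int x) (int p) = k}"
  proof (intro equalityI subsetI)
    fix y assume "y \<in> ?g ` {m \<in> {t..<t+p}. Legendre (int (m + a)) (int p) = k}"
    then obtain m where "m \<in> {t..<t+p}" "Legendre (int (m + a)) (int p) = k" "y = ?g m" by blast
    then show "y \<in> {x \<in> {0..<p}. Legendre (int x) (int p) = k}"
      using p0 Legendre_mod_nat[of "m + a" p] by simp
  next
    fix x assume "x \<in> {x \<in> {0..<p}. Legendre (int x) (int p) = k}"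
    then have x: "x \<in> {0..<p}" "Legendre (int x) (int p) = k" by auto
    then have "x \<in> ?g ` {t..<t+p}" using bij unfolding bij_betw_def by simp
    then obtain m where m: "m \<in> {t..<t+p}" "?g m = x" by blast
    then have "Legendre (int (m + a)) (int p) = k" using x Legendre_mod_nat[of "m + a" p] by simp
    then show "x \<in> ?g ` {m \<in> {t..<t+p}. Legendre (int (m + a)) (int p) = k}" using m by blast
  qed
  then have "card {m \<in> {t..<t+p}. Legendre (int (m + a)) (int p) = k} = card {x \<in> {0..<p}. Legendre (int x) (int p) = k}"
    using card_image[OF inj] by simp
  then show ?thesis using QR_count[OF pr od k] by simp
qed

lemma multi_count:
  fixes p t a q :: nat assumes pr: "prime p" and od: "odd p" and k: "k \<in> {-1, 1::int}"
  shows "card {m \<in> {t..<t+q*p}. Legendre (int (m + a)) (int p) = k} = q * ((p - 1) div 2)"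
proof (induction q)
  case 0 then show ?case by simp
next
  case (Suc q)
  let ?P = "\<lambda>m. Legendre (int (m + a)) (int p) = k"
  have "{m \<in> {t..<t+Suc q*p}. ?P m} = {m \<in> {t..<t+q*p}. ?P m} \<union> {m \<in> {t+q*p..<t+q*p+p}. ?P m}"
    by auto
  moreover have "{m \<in> {t..<t+q*p}. ?P m} \<inter> {m \<in> {t+q*p..<t+q*p+p}. ?P m} = {}" by auto
  ultimately have "card {m \<in> {t..<t+Suc q*p}. ?P m} = card {m \<in> {t..<t+q*p}. ?P m} + card {m \<in> {t+q*p..<t+q*p+p}. ?P m}"
    by (simp add: card_Un_disjoint)
  then show ?case using Suc block_count[OF pr od k, of "t+q*p" a] by simp
qed

lemma tail_count:
  fixes p a r s :: nat assumes pr: "prime p" and rp: "r < p" and G: "G \<subseteq> {1..r}" and s: "p dvd s"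
  shows "card {c \<in> G. Legendre (int (s + c + a)) (int p) = k}
       = card {\<xi> \<in> {0..<p}. (\<exists>c\<in>G. [\<xi> = a + c] (mod p)) \<and> Legendre (int \<xi>) (int p) = k}"
proof -
  let ?g = "\<lambda>c. (c + a) mod p"
  have p0: "p > 0" using pr prime_gt_0_nat by blast
  have sub: "{c \<in> G. Legendre (int (s + c + a)) (int p) = k} \<subseteq> {1..<1+p}" using G rp by auto
  have inj: "inj_on ?g {c \<in> G. Legendre (int (s + c + a)) (int p) = k}"
    using inj_on_subset[OF mod_inj_block[of a p 1] sub] .
  have L: "Legendre (int (s + c + a)) (int p) = Legendre (int ((c + a) mod p)) (int p)" for c
  proof -
    obtain j where j: "s = p * j" using s by (auto elim: dvdE)
    have "(s + c + a) mod p = (c + a) mod p" unfolding j by (simp add: add.assoc)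
    then show ?thesis using Legendre_mod_nat[of "s + c + a" p] by simp
  qed
  have "?g ` {c \<in> G. Legendre (int (s + c + a)) (int p) = k}
      = {\<xi> \<in> {0..<p}. (\<exists>c\<in>G. [\<xi> = a + c] (mod p)) \<and> Legendre (int \<xi>) (int p) = k}"
  proof (intro equalityI subsetI)
    fix y assume "y \<in> ?g ` {c \<in> G. Legendre (int (s + c + a)) (int p) = k}"
    then obtain c where c: "c \<in> G" "Legendre (int (s + c + a)) (int p) = k" "y = ?g c" by blast
    have "[y = a + c] (mod p)" using c(3) by (simp add: cong_def add.commute)
    moreover have "y < p" using p0 c(3) by simp
    moreover have "Legendre (int y) (int p) = k" using c L by simp
    ultimately show "y \<in> {\<xi> \<in> {0..<p}. (\<exists>c\<in>G. [\<xi> = a + c] (mod p)) \<and> Legendre (int \<xi>) (int p) = k}"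
      using c(1) by auto
  next
    fix \<xi> assume "\<xi> \<in> {\<xi> \<in> {0..<p}. (\<exists>c\<in>G. [\<xi> = a + c] (mod p)) \<and> Legendre (int \<xi>) (int p) = k}"
    then obtain c where x: "\<xi> \<in> {0..<p}" "c \<in> G" "[\<xi> = a + c] (mod p)" "Legendre (int \<xi>) (int p) = k" by blast
    have "?g c = \<xi>" using x by (simp add: cong_def add.commute)
    moreover have "Legendre (int (s + c + a)) (int p) = k" using L[of c] x \<open>?g c = \<xi>\<close> by simp
    ultimately show "\<xi> \<in> ?g ` {c \<in> G. Legendre (int (s + c + a)) (int p) = k}" using x(2) by blast
  qed
  then show ?thesis using card_image[OF inj] by simp
qed


lemma deg_eq:
  assumes G: "legendre_graph V E f n k p" and v: "v \<in> V" and k0: "k \<noteq> 0"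
  shows "degree V E v = card {m \<in> {1..n}. m \<noteq> f v \<and> Legendre (int (m + f v)) (int p) = k}"
proof -
  have fin: "finite V" and bij: "bij_betw f V {1..n}"
    and Edef: "E = {{a, b} | a b. a \<in> V \<and> b \<in> V \<and> a \<noteq> b \<and> \<not> p dvd (f a + f b) \<and>
                        Legendre (int (f a + f b)) (int p) = k}"
    using G unfolding legendre_graph_def by auto
  have ndvd: "\<not> p dvd x" if "Legendre (int x) (int p) = k" for x
  proof
    assume "p dvd x"
    then have "[int x = 0] (mod int p)" by (simp add: cong_0_iff)
    then show False using that k0 unfolding Legendre_def by simp
  qed
  have S: "{u \<in> V. {u, v} \<in> E} = {u \<in> V. u \<noteq> v \<and> Legendre (int (f u + f v)) (int p) = k}"
  proof (intro equalityI subsetI)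
    fix u assume "u \<in> {u \<in> V. {u, v} \<in> E}"
    then have u: "u \<in> V" and "{u, v} \<in> E" by auto
    then have "\<exists>a b. {u, v} = {a, b} \<and> a \<in> V \<and> b \<in> V \<and> a \<noteq> b \<and> \<not> p dvd (f a + f b) \<and>
                        Legendre (int (f a + f b)) (int p) = k" unfolding Edef by (simp only: mem_Collect_eq)
    then obtain a b where ab: "{u, v} = {a, b}" "a \<noteq> b" "Legendre (int (f a + f b)) (int p) = k"
      by blast
    from ab(1) have "(u = a \<and> v = b) \<or> (u = b \<and> v = a)" by (simp add: doubleton_eq_iff)
    then show "u \<in> {u \<in> V. u \<noteq> v \<and> Legendre (int (f u + f v)) (int p) = k}"
      using ab u by (auto simp: add.commute)
  next
    fix u assume "u \<in> {u \<in> V. u \<noteq> v \<and> Legendre (int (f u + f v)) (int p) = k}"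
    then have u: "u \<in> V" "u \<noteq> v" "Legendre (int (f u + f v)) (int p) = k" by auto
    then have "\<exists>a b. {u, v} = {a, b} \<and> a \<in> V \<and> b \<in> V \<and> a \<noteq> b \<and> \<not> p dvd (f a + f b) \<and>
                        Legendre (int (f a + f b)) (int p) = k" using v ndvd[of "f u + f v"] by blast
    then have "{u, v} \<in> E" unfolding Edef by (simp only: mem_Collect_eq)
    then show "u \<in> {u \<in> V. {u, v} \<in> E}" using u by simp
  qed
  have inj: "inj_on f V" using bij by (simp add: bij_betw_def)
  have img: "f ` {u \<in> V. u \<noteq> v \<and> Legendre (int (f u + f v)) (int p) = k}
           = {m \<in> {1..n}. m \<noteq> f v \<and> Legendre (int (m + f v)) (int p) = k}"
  proof (intro equalityI subsetI)
    fix y assume "y \<in> f ` {u \<in> V. u \<noteq> v \<and> Legendre (int (f u + f v)) (int p) = k}"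
    then obtain u where u: "u \<in> V" "u \<noteq> v" "Legendre (int (f u + f v)) (int p) = k" "y = f u" by blast
    have "f u \<noteq> f v" using inj u v unfolding inj_on_def by blast
    moreover have "f u \<in> {1..n}" using bij u unfolding bij_betw_def by blast
    ultimately show "y \<in> {m \<in> {1..n}. m \<noteq> f v \<and> Legendre (int (m + f v)) (int p) = k}" using u by simp
  next
    fix m assume "m \<in> {m \<in> {1..n}. m \<noteq> f v \<and> Legendre (int (m + f v)) (int p) = k}"
    then have m: "m \<in> {1..n}" "m \<noteq> f v" "Legendre (int (m + f v)) (int p) = k" by auto
    then have "m \<in> f ` V" using bij unfolding bij_betw_def by simp
    then obtain u where u: "u \<in> V" "m = f u" by blast
    then have "u \<noteq> v" using m by auto
    then show "m \<in> f ` {u \<in> V. u \<noteq> v \<and> Legendre (int (f u + f v)) (int p) = k}" using u m by blast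
  qed
  have "inj_on f {u \<in> V. u \<noteq> v \<and> Legendre (int (f u + f v)) (int p) = k}"
    using inj by (rule inj_on_subset) auto
  then have "card (f ` {u \<in> V. u \<noteq> v \<and> Legendre (int (f u + f v)) (int p) = k}) = card {u \<in> V. u \<noteq> v \<and> Legendre (int (f u + f v)) (int p) = k}"
    by (rule card_image)
  then show ?thesis unfolding degree_def S img by simp
qed


theorem lemma3p2:
  fixes V :: "'a set" and E :: "'a set set" and f :: "'a \<Rightarrow> nat"
    and n p :: nat and k :: int and v :: "'a"
  assumes "prime p" and "odd p" and "k \<in> {-1, 1}" and "n \<ge> 1"
    and "legendre_graph V E f n k p"
    and "v \<in> V"
  defines "q \<equiv> n div p"
  defines "r \<equiv> n - q * p"
  defines "F \<equiv> {1..r}"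
  defines "\<omega> \<equiv> {\<xi> \<in> {0..<p}. (\<exists>c\<in>F. [\<xi> = f v + c] (mod p)) \<and> Legendre (int \<xi>) (int p) = k}"
  defines "\<epsilon> \<equiv> f v - q * p"
  defines "\<pi> \<equiv> {\<xi> \<in> {0..<p}. (\<exists>c\<in>F - {\<epsilon>}. [\<xi> = f v + c] (mod p)) \<and> Legendre (int \<xi>) (int p) = k}"
  shows "(1 \<le> f v \<and> f v \<le> q * p \<and> Legendre (int (2 * f v)) (int p) = k \<longrightarrow>
            int (degree V E v) = int q * ((int p - 1) div 2) - 1 + int (card \<omega>))
       \<and> (1 \<le> f v \<and> f v \<le> q * p \<and> (Legendre (int (2 * f v)) (int p) = - k \<or> [f v = 0] (mod p)) \<longrightarrow>
            int (degree V E v) = int q * ((int p - 1) div 2) + int (card \<omega>))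
       \<and> (q * p + 1 \<le> f v \<and> f v \<le> n \<longrightarrow>
            int (degree V E v) = int q * ((int p - 1) div 2) + int (card \<pi>))"
proof -
  note pr = assms(1) and od = assms(2) and kk = assms(3)
  define a where "a = f v"
  define P where "P = (\<lambda>m. Legendre (int (m + a)) (int p) = k)"
  have k0: "k \<noteq> 0" using kk by auto
  have p1: "p > 1" using pr prime_gt_1_nat by blast
  have nqr: "n = q * p + r" unfolding r_def q_def by (simp add: minus_div_mult_eq_mod)
  have rp: "r < p" unfolding r_def q_def using p1 by (simp add: minus_div_mult_eq_mod)
  have bij: "bij_betw f V {1..n}" using assms(5) unfolding legendre_graph_def by auto
  have a1n: "a \<in> {1..n}" using bij assms(6) unfolding a_def bij_betw_def by blast
  define D where "D = {m \<in> {1..n}. m \<noteq> a \<and> P m}"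
  have deg: "degree V E v = card D"
    unfolding D_def P_def a_def by (rule deg_eq[OF assms(5) assms(6) k0])
  define D1 where "D1 = {m \<in> {1..<1+q*p}. m \<noteq> a \<and> P m}"
  define D2 where "D2 = {m \<in> {1+q*p..n}. m \<noteq> a \<and> P m}"
  have "D = D1 \<union> D2" unfolding D_def D1_def D2_def using nqr by auto
  moreover have "D1 \<inter> D2 = {}" unfolding D1_def D2_def by auto
  moreover have "finite D1" "finite D2" unfolding D1_def D2_def by auto
  ultimately have cD: "card D = card D1 + card D2" by (simp add: card_Un_disjoint)
  define B where "B = {m \<in> {1..<1+q*p}. P m}"
  have cB: "card B = q * ((p - 1) div 2)" unfolding B_def P_def
    using multi_count[OF pr od kk, of 1 q a] by simp
  define G where "G = {c \<in> F. q * p + c \<noteq> a}"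
  have D2eq: "D2 = (\<lambda>c. q * p + c) ` {c \<in> G. Legendre (int (q * p + c + a)) (int p) = k}"
  proof (intro equalityI subsetI)
    fix m assume "m \<in> D2"
    then have m: "m \<in> {1+q*p..n}" "m \<noteq> a" "P m" unfolding D2_def by auto
    then have "m - q * p \<in> {c \<in> G. Legendre (int (q * p + c + a)) (int p) = k}"
      unfolding G_def F_def P_def using nqr by auto
    moreover have "m = q * p + (m - q * p)" using m by auto
    ultimately show "m \<in> (\<lambda>c. q * p + c) ` {c \<in> G. Legendre (int (q * p + c + a)) (int p) = k}" by blast
  next
    fix m assume "m \<in> (\<lambda>c. q * p + c) ` {c \<in> G. Legendre (int (q * p + c + a)) (int p) = k}"
    then obtain c where "c \<in> G" "Legendre (int (q * p + c + a)) (int p) = k" "m = q * p + c" by blast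
    then show "m \<in> D2" unfolding D2_def G_def F_def P_def using nqr by auto
  qed
  have "card D2 = card {c \<in> G. Legendre (int (q * p + c + a)) (int p) = k}"
    unfolding D2eq by (rule card_image) (simp add: inj_on_def)
  also have "\<dots> = card {\<xi> \<in> {0..<p}. (\<exists>c\<in>G. [\<xi> = a + c] (mod p)) \<and> Legendre (int \<xi>) (int p) = k}"
    by (rule tail_count[OF pr rp]) (auto simp: G_def F_def)
  finally have cD2: "card D2 = card {\<xi> \<in> {0..<p}. (\<exists>c\<in>G. [\<xi> = a + c] (mod p)) \<and> Legendre (int \<xi>) (int p) = k}" .
  have Pa: "P a \<longleftrightarrow> Legendre (int (2 * f v)) (int p) = k" unfolding P_def a_def mult_2 by (rule refl)
  have iq: "int q * ((int p - 1) div 2) = int (q * ((p - 1) div 2))"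
    using p1 by (simp add: zdiv_int of_nat_diff)
  have c1: "int (degree V E v) = int q * ((int p - 1) div 2) - 1 + int (card \<omega>)"
    if h: "1 \<le> f v \<and> f v \<le> q * p \<and> Legendre (int (2 * f v)) (int p) = k"
  proof -
    have "G = F" unfolding G_def F_def using h a_def by auto
    then have "card D2 = card \<omega>" using cD2 unfolding \<omega>_def a_def by simp
    moreover have "D1 = B - {a}" unfolding D1_def B_def by auto
    moreover have "a \<in> B" unfolding B_def using h Pa a_def by auto
    moreover have "finite B" unfolding B_def by auto
    ultimately have "card D1 = card B - 1" "card B \<ge> 1"
      by (auto simp: Suc_leI card_gt_0_iff)
      (use \<open>a \<in> B\<close> \<open>finite B\<close> in \<open>metis card_0_eq empty_iff not_less_eq_eq le_0_eq\<close>)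
    then have "int (degree V E v) = int (card B) - 1 + int (card \<omega>)"
      using deg cD \<open>card D2 = card \<omega>\<close> by (simp add: of_nat_diff)
    then show ?thesis unfolding iq cB .
  qed
  have c2: "int (degree V E v) = int q * ((int p - 1) div 2) + int (card \<omega>)"
    if h: "1 \<le> f v \<and> f v \<le> q * p \<and> (Legendre (int (2 * f v)) (int p) = - k \<or> [f v = 0] (mod p))"
  proof -
    have "G = F" unfolding G_def F_def using h a_def by auto
    then have "card D2 = card \<omega>" using cD2 unfolding \<omega>_def a_def by simp
    have "\<not> P a"
    proof
      assume "P a"
      then have L: "Legendre (int (2 * f v)) (int p) = k" using Pa by simp
      from h have "Legendre (int (2 * f v)) (int p) = - k \<or> [f v = 0] (mod p)" by blast
      then show False
      proof
        assume "Legendre (int (2 * f v)) (int p) = - k"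
        then show False using L k0 by simp
      next
        assume "[f v = 0] (mod p)"
        then have "[int (2 * f v) = 0] (mod int p)"
          by (metis cong_int_iff cong_scalar_left mult_zero_right of_nat_0)
        then show False using L k0 unfolding Legendre_def by simp
      qed
    qed
    then have "D1 = B" unfolding D1_def B_def by auto
    then show ?thesis unfolding iq using deg cD cB \<open>card D2 = card \<omega>\<close> by simp
  qed
  have c3: "int (degree V E v) = int q * ((int p - 1) div 2) + int (card \<pi>)"
    if h: "q * p + 1 \<le> f v \<and> f v \<le> n"
  proof -
    have "G = F - {\<epsilon>}" unfolding G_def F_def \<epsilon>_def using h a_def by auto
    then have "card D2 = card \<pi>" using cD2 unfolding \<pi>_def a_def by simp
    moreover have "D1 = B" unfolding D1_def B_def using h a_def by auto
    ultimately show ?thesis unfolding iq using deg cD cB by simp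
  qed
  show ?thesis using c1 c2 c3 by blast
qed


end
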